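(* Let $\mathcal{S}=\{1,\dots,K\}$ be a finite set of settings. For each $i\in\mathcal{S}$ suppose $Y^i=\theta^iD^i+f^i(X^i,A^i)+\varepsilon^i$ with $E[\varepsilon^i\mid D^i,X^i,A^i]=0$ ($D^i$ real-valued treatment, $X^i$ observed, $A^i$ unobserved covariates), let $\theta^i_s$ be the short-regression parameter omitting $A^i$, let $B^i=\theta^i_s-\theta^i$, and assume $B^i\in[\nu^i_l,\nu^i_u]$ for known $\nu^i_l\le\nu^i_u$. For every pair $(j,k)$ assume $B^j=\rho^{jk}B^k$ with $\rho^{jk}\in[\rho^{jk}_l,\rho^{jk}_u]$, $0<\rho^{jk}_l\le1\le\rho^{jk}_u$ known. Define $\mathcal{I}^i=[\theta^i_s-\nu^i_u,\theta^i_s-\nu^i_l]$, $c^{jk}_l,c^{jk}_u$ as the min and max of $\{(\rho^{jk}_l-1)\nu^k_l,(\rho^{jk}_u-1)\nu^k_l,(\rho^{jk}_l-1)\nu^k_u,(\rho^{jk}_u-1)\nu^k_u\}$, and $\mathcal{I}^D_{jk}=[(\theta^j_s-\theta^k_s)-c^{jk}_u,(\theta^j_s-\theta^k_s)-c^{jk}_l]$. Then the true vector $(\theta^1,\dots,\theta^K)$ belongs to the polytope \[ \mathcal{J}=\{(\theta^1,\dots,\theta^K):\theta^i\in\mathcal{I}^i\ \forall i,\ \theta^j-\theta^k\in\mathcal{I}^D_{jk}\ \forall (j,k)\}, \] which is defined by at most $2K+K(K-1)$ linear inequality constraints in $K$ unknowns. The marginal identified set for any $\theta^i$ is the interval $[\underline{\theta}^i,\overline{\theta}^i]$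 with $\underline{\theta}^i=\min_{\mathcal{J}}\theta^i$ and $\overline{\theta}^i=\max_{\mathcal{J}}\theta^i$, each of which is the solution of a linear program.
   Context: The long parameter is $\theta^i=E[Y^i\alpha^i]$ with $\alpha^i=(D^i-E[D^i\mid X^i,A^i])/E[(D^i-E[D^i\mid X^i,A^i])^2]$, and the short parameter is $\theta^i_s=E[Y^i\alpha^i_s]$ with $\alpha^i_s=(D^i-E[D^i\mid X^i])/E[(D^i-E[D^i\mid X^i])^2]$. The marginal identified set for $\theta^i$ is the projection of $\mathcal{J}$ onto the $i$-th coordinate. *)

theory Defs
  imports "HOL-Analysis.Analysis"
begin

text \<open>Settings are indexed by {1..K}; vectors (theta^1,...,theta^K) are represented as
  functions nat => real, of which only the coordinates in {1..K} matter.\<close>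

definition I_set :: "real \<Rightarrow> real \<Rightarrow> real \<Rightarrow> real set" where
  "I_set ths nul nuu = {ths - nuu .. ths - nul}"

definition c_l :: "real \<Rightarrow> real \<Rightarrow> real \<Rightarrow> real \<Rightarrow> real" where
  "c_l rl ru nul nuu = Min {(rl - 1) * nul, (ru - 1) * nul, (rl - 1) * nuu, (ru - 1) * nuu}"

definition c_u :: "real \<Rightarrow> real \<Rightarrow> real \<Rightarrow> real \<Rightarrow> real" where
  "c_u rl ru nul nuu = Max {(rl - 1) * nul, (ru - 1) * nul, (rl - 1) * nuu, (ru - 1) * nuu}"

definition ID_set :: "real \<Rightarrow> real \<Rightarrow> real \<Rightarrow> real \<Rightarrow> real \<Rightarrow> real \<Rightarrow> real set" where
  "ID_set thsj thsk rl ru nul nuu =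
     {(thsj - thsk) - c_u rl ru nul nuu .. (thsj - thsk) - c_l rl ru nul nuu}"

definition J_set :: "nat \<Rightarrow> (nat \<Rightarrow> real) \<Rightarrow> (nat \<Rightarrow> real) \<Rightarrow> (nat \<Rightarrow> real)
    \<Rightarrow> (nat \<Rightarrow> nat \<Rightarrow> real) \<Rightarrow> (nat \<Rightarrow> nat \<Rightarrow> real) \<Rightarrow> (nat \<Rightarrow> real) set" where
  "J_set K ths nul nuu rhol rhou =
     {t. (\<forall>i\<in>{1..K}. t i \<in> I_set (ths i) (nul i) (nuu i)) \<and>
         (\<forall>j\<in>{1..K}. \<forall>k\<in>{1..K}.
            t j - t k \<in> ID_set (ths j) (ths k) (rhol j k) (rhou j k) (nul k) (nuu k))}"

end

theory Submission imports Defs begin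

lemma lin_between:
  fixes a x y :: real
  assumes "x \<le> y" "x \<le> z" "z \<le> y"
  shows "min (x*a) (y*a) \<le> z*a \<and> z*a \<le> max (x*a) (y*a)"
proof (cases "a \<ge> 0")
  case True
  then show ?thesis using assms mult_right_mono[of x z a] mult_right_mono[of z y a] by auto
next
  case False
  then show ?thesis using assms mult_right_mono_neg[of x z a] mult_right_mono_neg[of z y a] by auto
qed

lemma corner:
  fixes rl ru r nl nu b :: real
  assumes "rl \<le> r" "r \<le> ru" "nl \<le> b" "b \<le> nu"
  shows "c_l rl ru nl nu \<le> (r - 1) * b \<and> (r - 1) * b \<le> c_u rl ru nl nu"
proof -
  have 1: "min ((rl-1)*b) ((ru-1)*b) \<le> (r-1)*b \<and> (r-1)*b \<le> max ((rl-1)*b) ((ru-1)*b)"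
    using lin_between[of "rl-1" "ru-1" "r-1" b] assms by auto
  have 2: "min ((rl-1)*nl) ((rl-1)*nu) \<le> (rl-1)*b \<and> (rl-1)*b \<le> max ((rl-1)*nl) ((rl-1)*nu)"
    using lin_between[of nl nu b "rl-1"] assms by (auto simp: mult.commute)
  have 3: "min ((ru-1)*nl) ((ru-1)*nu) \<le> (ru-1)*b \<and> (ru-1)*b \<le> max ((ru-1)*nl) ((ru-1)*nu)"
    using lin_between[of nl nu b "ru-1"] assms by (auto simp: mult.commute)
  show ?thesis unfolding c_l_def c_u_def using 1 2 3 by (simp add: min_def max_def split: if_splits) 
qed

lemma c_sign:
  fixes rl ru nl nu :: real
  assumes "rl \<le> 1" "1 \<le> ru" "nl \<le> nu"
  shows "c_l rl ru nl nu \<le> 0 \<and> 0 \<le> c_u rl ru nl nu"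
  using corner[of rl 1 ru nl nl nu] assms by simp


lemma conv_between:
  fixes a b p q u :: real
  assumes "a \<le> p" "p \<le> b" "a \<le> q" "q \<le> b" "0 \<le> u" "u \<le> 1"
  shows "a \<le> (1-u)*p + u*q \<and> (1-u)*p + u*q \<le> b"
proof -
  have "(1-u)*a \<le> (1-u)*p" "u*a \<le> u*q" "(1-u)*p \<le> (1-u)*b" "u*q \<le> u*b"
    using assms by (auto intro: mult_left_mono)
  then show ?thesis by (simp add: algebra_simps)
qed

lemma J_conv:
  assumes "t1 \<in> J_set K ths nul nuu rhol rhou" "t2 \<in> J_set K ths nul nuu rhol rhou"
    "0 \<le> u" "u \<le> (1::real)"
  shows "(\<lambda>m. (1-u)*t1 m + u*t2 m) \<in> J_set K ths nul nuu rhol rhou"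
proof -
  have eq: "((1-u)*t1 j + u*t2 j) - ((1-u)*t1 k + u*t2 k) = (1-u)*(t1 j - t1 k) + u*(t2 j - t2 k)" for j k
    by (simp add: algebra_simps)
  show ?thesis using assms unfolding J_set_def I_set_def ID_set_def
    apply (simp only: mem_Collect_eq eq atLeastAtMost_iff)
    apply (intro conjI ballI)
    subgoal for i using conv_between[of _ "t1 i" _ "t2 i" u] by blast
    subgoal for i using conv_between[of _ "t1 i" _ "t2 i" u] by blast
    subgoal for j k using conv_between[of _ "t1 j - t1 k" _ "t2 j - t2 k" u] by blast
    subgoal for j k using conv_between[of _ "t1 j - t1 k" _ "t2 j - t2 k" u] by blast
    done
qed

lemma closed_imp_const: "closed {x. Q x} \<Longrightarrow> closed {x. c \<longrightarrow> Q x}"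
  by (cases c) auto

lemma J_closed: "closed (J_set K ths nul nuu rhol rhou)"
  unfolding J_set_def I_set_def ID_set_def atLeastAtMost_iff Ball_def
  by (intro closed_Collect_conj closed_Collect_all closed_imp_const closed_Collect_le
        continuous_on_diff continuous_on_const continuous_on_product_coordinates)

lemma off_card: "card {(j,k). j\<in>{1..K} \<and> k\<in>{1..K} \<and> j\<noteq>(k::nat)} = K*(K-1)"
proof -
  have "{(j,k). j\<in>{1..K} \<and> k\<in>{1..K} \<and> j\<noteq>(k::nat)} = {1..K}\<times>{1..K} - (\<lambda>i. (i,i)) ` {1..K}"
    by auto
  moreover have "card ((\<lambda>i::nat. (i,i)) ` {1..K}) = K"
    by (subst card_image) (auto simp: inj_on_def)
  moreover have "(\<lambda>i::nat. (i,i)) ` {1..K} \<subseteq> {1..K}\<times>{1..K}" by auto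
  ultimately show ?thesis
    by (simp add: card_Diff_subset card_cartesian_product diff_mult_distrib2)
qed

lemma sum_e: "i \<in> {1..(K::nat)} \<Longrightarrow> (\<Sum>m=1..K. (if m = i then 1 else 0) * t m) = (t i :: real)"
  proof -
  have "(\<Sum>m=1..K. (if m = i then 1 else 0) * t m) = (\<Sum>m=1..K. if m = i then t m else 0)"
    by (rule sum.cong) auto
  also assume "i \<in> {1..K}"
  then have "(\<Sum>m=1..K. if m = i then t m else 0) = t i" by (subst sum.delta) auto
  finally show ?thesis .
qed

theorem proposition4:
  fixes K :: nat
    and theta theta_s B nu_l nu_u :: "nat \<Rightarrow> real"
    and rho rho_l rho_u :: "nat \<Rightarrow> nat \<Rightarrow> real"
  assumes B_def: "\<forall>i\<in>{1..K}. B i = theta_s i - theta i"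
    and nu_le: "\<forall>i\<in>{1..K}. nu_l i \<le> nu_u i"
    and B_bounds: "\<forall>i\<in>{1..K}. B i \<in> {nu_l i .. nu_u i}"
    and rho_l_pos: "\<forall>j\<in>{1..K}. \<forall>k\<in>{1..K}. 0 < rho_l j k"
    and rho_l_le1: "\<forall>j\<in>{1..K}. \<forall>k\<in>{1..K}. rho_l j k \<le> 1"
    and rho_u_ge1: "\<forall>j\<in>{1..K}. \<forall>k\<in>{1..K}. 1 \<le> rho_u j k"
    and rho_bounds: "\<forall>j\<in>{1..K}. \<forall>k\<in>{1..K}. rho j k \<in> {rho_l j k .. rho_u j k}"
    and B_ratio: "\<forall>j\<in>{1..K}. \<forall>k\<in>{1..K}. B j = rho j k * B k"
  shows "theta \<in> J_set K theta_s nu_l nu_u rho_l rho_u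
    \<and> (\<exists>C :: ((nat \<Rightarrow> real) \<times> real) set. finite C \<and> card C \<le> 2 * K + K * (K - 1) \<and>
         J_set K theta_s nu_l nu_u rho_l rho_u =
           {t. \<forall>(a, b)\<in>C. (\<Sum>i=1..K. a i * t i) \<le> b})
    \<and> (\<forall>i\<in>{1..K}. \<exists>lo hi.
         lo \<in> (\<lambda>t. t i) ` J_set K theta_s nu_l nu_u rho_l rho_u \<and>
         hi \<in> (\<lambda>t. t i) ` J_set K theta_s nu_l nu_u rho_l rho_u \<and>
         (\<forall>t\<in>J_set K theta_s nu_l nu_u rho_l rho_u. lo \<le> t i \<and> t i \<le> hi) \<and>
         (\<lambda>t. t i) ` J_set K theta_s nu_l nu_u rho_l rho_u = {lo .. hi})"
proof -
  let ?J = "J_set K theta_s nu_l nu_u rho_l rho_u"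
  define cl where "cl j k = c_l (rho_l j k) (rho_u j k) (nu_l k) (nu_u k)" for j k
  define cu where "cu j k = c_u (rho_l j k) (rho_u j k) (nu_l k) (nu_u k)" for j k
  have Jmem: "t \<in> ?J \<longleftrightarrow> (\<forall>i\<in>{1..K}. theta_s i - nu_u i \<le> t i \<and> t i \<le> theta_s i - nu_l i) \<and>
      (\<forall>j\<in>{1..K}. \<forall>k\<in>{1..K}. theta_s j - theta_s k - cu j k \<le> t j - t k \<and>
          t j - t k \<le> theta_s j - theta_s k - cl j k)" for t
    unfolding J_set_def I_set_def ID_set_def cl_def cu_def by simp
  have P1: "theta \<in> ?J"
    unfolding Jmem
  proof (intro conjI ballI)
    fix i assume "i \<in> {1..K}"
    then show "theta_s i - nu_u i \<le> theta i" "theta i \<le> theta_s i - nu_l i"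
    proof -
      have "B i = theta_s i - theta i" "B i \<in> {nu_l i .. nu_u i}"
        using B_def B_bounds \<open>i \<in> {1..K}\<close> by blast+
      then have "B i = theta_s i - theta i" "nu_l i \<le> B i" "B i \<le> nu_u i" by auto
      then show "theta_s i - nu_u i \<le> theta i" "theta i \<le> theta_s i - nu_l i" by linarith+
    qed
  next
    fix j k assume j: "j \<in> {1..K}" and k: "k \<in> {1..K}"
    have eq: "theta j - theta k = theta_s j - theta_s k - (rho j k - 1) * B k"
    proof -
      have "B j = rho j k * B k" using B_ratio j k by blast
      moreover have "B j = theta_s j - theta j" "B k = theta_s k - theta k" using B_def j k by blast+
      ultimately have "theta j = theta_s j - rho j k * B k" "theta k = theta_s k - B k" by linarith+
      then show ?thesis unfolding left_diff_distrib by simp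
    qed
    have "cl j k \<le> (rho j k - 1) * B k \<and> (rho j k - 1) * B k \<le> cu j k"
      unfolding cl_def cu_def
      by (rule corner) (use rho_bounds B_bounds j k in auto)
    then show "theta_s j - theta_s k - cu j k \<le> theta j - theta k"
      "theta j - theta k \<le> theta_s j - theta_s k - cl j k" using eq by auto
  qed
  have diag: "cl k k \<le> 0 \<and> 0 \<le> cu k k" if "k \<in> {1..K}" for k
    unfolding cl_def cu_def by (rule c_sign) (use rho_l_le1 rho_u_ge1 nu_le that in auto)
  define e where "e i = (\<lambda>m::nat. if m = i then (1::real) else 0)" for i
  define U where "U j k = min (theta_s j - theta_s k - cl j k) (theta_s j - theta_s k + cu k j)" for j k
  define Off where "Off = {(j,k). j\<in>{1..K} \<and> k\<in>{1..K} \<and> j\<noteq>(k::nat)}"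
  define A1 where "A1 = (\<lambda>i. (e i, theta_s i - nu_l i)) ` {1..K}"
  define A2 where "A2 = (\<lambda>i. (\<lambda>m. - e i m, nu_u i - theta_s i)) ` {1..K}"
  define A3 where "A3 = (\<lambda>(j,k). (\<lambda>m. e j m - e k m, U j k)) ` Off"
  have se: "(\<Sum>m=1..K. e i m * t m) = t i" if "i \<in> {1..K}" for i t
    unfolding e_def using sum_e[OF that] by simp
  have se2: "(\<Sum>m=1..K. (- e i m) * t m) = - t i" if "i \<in> {1..K}" for i t
    using se[OF that, of t] by (simp add: sum_negf)
  have se3: "(\<Sum>m=1..K. (e j m - e k m) * t m) = t j - t k" if "j \<in> {1..K}" "k \<in> {1..K}" for j k t
    using se[OF that(1), of t] se[OF that(2), of t] by (simp add: left_diff_distrib sum_subtractf)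
  have finOff: "finite Off" unfolding Off_def
    by (rule finite_subset[of _ "{1..K}\<times>{1..K}"]) auto
  have P2: "finite (A1 \<union> A2 \<union> A3) \<and> card (A1 \<union> A2 \<union> A3) \<le> 2 * K + K * (K - 1) \<and>
      ?J = {t. \<forall>(a, b)\<in>A1 \<union> A2 \<union> A3. (\<Sum>i=1..K. a i * t i) \<le> b}"
  proof (intro conjI)
    show "finite (A1 \<union> A2 \<union> A3)" unfolding A1_def A2_def A3_def using finOff by auto
    have "card (A1 \<union> A2 \<union> A3) \<le> card A1 + card A2 + card A3"
      by (meson add_mono_thms_linordered_semiring(3) card_Un_le order_trans)
    also have "\<dots> \<le> K + K + K * (K - 1)"
    proof -
      have "card A1 \<le> card {1..K}" unfolding A1_def by (rule card_image_le) simp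
      moreover have "card A2 \<le> card {1..K}" unfolding A2_def by (rule card_image_le) simp
      moreover have "card A3 \<le> card Off" unfolding A3_def by (rule card_image_le[OF finOff])
      moreover have "card Off = K * (K - 1)" unfolding Off_def by (rule off_card)
      ultimately show ?thesis by simp
    qed
    finally show "card (A1 \<union> A2 \<union> A3) \<le> 2 * K + K * (K - 1)" by simp
    show "?J = {t. \<forall>(a, b)\<in>A1 \<union> A2 \<union> A3. (\<Sum>i=1..K. a i * t i) \<le> b}"
    proof (intro set_eqI iffI)
      fix t assume "t \<in> ?J"
      then have h1: "\<forall>i\<in>{1..K}. theta_s i - nu_u i \<le> t i \<and> t i \<le> theta_s i - nu_l i"
        and h2: "\<forall>j\<in>{1..K}. \<forall>k\<in>{1..K}. theta_s j - theta_s k - cu j k \<le> t j - t k \<and>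
          t j - t k \<le> theta_s j - theta_s k - cl j k" unfolding Jmem by auto
      have "(\<Sum>i=1..K. a i * t i) \<le> b" if ab: "(a,b) \<in> A1 \<union> A2 \<union> A3" for a b
      proof -
        consider (c1) "(a,b) \<in> A1" | (c2) "(a,b) \<in> A2" | (c3) "(a,b) \<in> A3" using ab by blast
        then show ?thesis
        proof cases
          case c1
          then obtain i where i: "i \<in> {1..K}" "a = e i" "b = theta_s i - nu_l i"
            unfolding A1_def by auto
          have "t i \<le> theta_s i - nu_l i" using h1 i(1) by blast
          then show ?thesis using i se[OF i(1), of t] by simp
        next
          case c2
          then obtain i where i: "i \<in> {1..K}" "a = (\<lambda>m. - e i m)" "b = nu_u i - theta_s i"
            unfolding A2_def by auto
          have "theta_s i - nu_u i \<le> t i" using h1 i(1) by blast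
          then show ?thesis using i se2[OF i(1), of t] by simp
        next
          case c3
          then obtain j k where jk: "(j,k) \<in> Off" "a = (\<lambda>m. e j m - e k m)" "b = U j k"
            unfolding A3_def by auto
          then have j: "j \<in> {1..K}" and k: "k \<in> {1..K}" unfolding Off_def by auto
          have "t j - t k \<le> theta_s j - theta_s k - cl j k" "theta_s k - theta_s j - cu k j \<le> t k - t j"
            using h2 j k by blast+
          then show ?thesis using jk(2,3) se3[OF j k, of t] unfolding U_def by simp
        qed
      qed
      then show "t \<in> {t. \<forall>(a, b)\<in>A1 \<union> A2 \<union> A3. (\<Sum>i=1..K. a i * t i) \<le> b}" by auto
    next
      fix t assume "t \<in> {t. \<forall>(a, b)\<in>A1 \<union> A2 \<union> A3. (\<Sum>i=1..K. a i * t i) \<le> b}"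
      then have H: "\<And>a b. (a,b) \<in> A1 \<union> A2 \<union> A3 \<Longrightarrow> (\<Sum>i=1..K. a i * t i) \<le> b" by auto
      show "t \<in> ?J" unfolding Jmem
      proof (intro conjI ballI)
        fix i assume i: "i \<in> {1..K}"
        have "(e i, theta_s i - nu_l i) \<in> A1 \<union> A2 \<union> A3" unfolding A1_def using i by auto
        from H[OF this] show "t i \<le> theta_s i - nu_l i" using se[OF i] by simp
        have "((\<lambda>m. - e i m), nu_u i - theta_s i) \<in> A1 \<union> A2 \<union> A3" unfolding A2_def using i by auto
        from H[OF this] show "theta_s i - nu_u i \<le> t i" using se2[OF i] by simp
      next
        fix j k assume j: "j \<in> {1..K}" and k: "k \<in> {1..K}"
        have "theta_s j - theta_s k - cu j k \<le> t j - t k \<and> t j - t k \<le> theta_s j - theta_s k - cl j k"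
        proof (cases "j = k")
          case True then show ?thesis using diag[OF k] by simp
        next
          case False
          have "((\<lambda>m. e j m - e k m), U j k) \<in> A1 \<union> A2 \<union> A3"
            unfolding A3_def Off_def using j k False by force
          from H[OF this] have u1: "t j - t k \<le> U j k" using se3[OF j k] by simp
          have "((\<lambda>m. e k m - e j m), U k j) \<in> A1 \<union> A2 \<union> A3"
            unfolding A3_def Off_def using j k False by force
          from H[OF this] have u2: "t k - t j \<le> U k j" using se3[OF k j] by simp
          show ?thesis using u1 u2 unfolding U_def by linarith
        qed
        then show "theta_s j - theta_s k - cu j k \<le> t j - t k" "t j - t k \<le> theta_s j - theta_s k - cl j k"
          by auto
      qed
    qed
  qed
  have P3: "\<exists>lo hi. lo \<in> (\<lambda>t. t i) ` ?J \<and> hi \<in> (\<lambda>t. t i) ` ?J \<and>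
         (\<forall>t\<in>?J. lo \<le> t i \<and> t i \<le> hi) \<and> (\<lambda>t. t i) ` ?J = {lo .. hi}" if i: "i \<in> {1..K}" for i
  proof -
    define P where "P = PiE UNIV (\<lambda>m. if m\<in>{1..K} then {theta_s m - nu_u m .. theta_s m - nu_l m} else {0::real})"
    have cP: "compact P"
    proof -
      have "compactin (product_topology (\<lambda>_. euclidean) UNIV) P"
        unfolding P_def compactin_PiE by auto
      then show ?thesis by (simp add: euclidean_product_topology)
    qed
    have cJP: "compact (P \<inter> ?J)" by (rule compact_Int_closed[OF cP J_closed])
    have img: "(\<lambda>t. t i) ` ?J = (\<lambda>t. t i) ` (P \<inter> ?J)"
    proof
      show "(\<lambda>t. t i) ` ?J \<subseteq> (\<lambda>t. t i) ` (P \<inter> ?J)"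
      proof
        fix x assume "x \<in> (\<lambda>t. t i) ` ?J"
        then obtain t where t: "t \<in> ?J" "x = t i" by auto
        define t' where "t' = (\<lambda>m. if m \<in> {1..K} then t m else 0)"
        have "t' \<in> ?J" using t(1) unfolding Jmem t'_def by simp
        moreover have "t' \<in> P" using t(1) unfolding Jmem P_def t'_def by auto
        moreover have "t' i = x" using t i unfolding t'_def by simp
        ultimately show "x \<in> (\<lambda>t. t i) ` (P \<inter> ?J)" by force
      qed
    qed auto
    define S where "S = (\<lambda>t. t i) ` ?J"
    have cS: "compact S" unfolding S_def img
      by (rule compact_continuous_image[OF continuous_on_subset[OF continuous_on_product_coordinates] cJP]) simp
    have neS: "S \<noteq> {}" unfolding S_def using P1 by auto
    obtain lo where lo: "lo \<in> S" "\<forall>x\<in>S. lo \<le> x" using compact_attains_inf[OF cS neS] by blast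
    obtain hi where hi: "hi \<in> S" "\<forall>x\<in>S. x \<le> hi" using compact_attains_sup[OF cS neS] by blast
    have "S = {lo..hi}"
    proof
      show "S \<subseteq> {lo..hi}" using lo hi by auto
      show "{lo..hi} \<subseteq> S"
      proof
        fix x assume x: "x \<in> {lo..hi}"
        obtain t1 where t1: "t1 \<in> ?J" "t1 i = lo" using lo(1) unfolding S_def by auto
        obtain t2 where t2: "t2 \<in> ?J" "t2 i = hi" using hi(1) unfolding S_def by auto
        show "x \<in> S"
        proof (cases "lo = hi")
          case True then show ?thesis using x lo by auto
        next
          case False
          then have lh: "lo < hi" using x by auto
          define u where "u = (x - lo) / (hi - lo)"
          have u: "0 \<le> u" "u \<le> 1" using x lh unfolding u_def by (auto simp: divide_simps)
          have "u*(hi-lo) = x - lo" using lh unfolding u_def by simp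
          moreover have "(1-u)*lo + u*hi = lo + u*(hi-lo)" by (simp add: algebra_simps)
          ultimately have "(1-u)*lo + u*hi = x" by simp
          moreover have "(\<lambda>m. (1-u)*t1 m + u*t2 m) \<in> ?J" by (rule J_conv[OF t1(1) t2(1) u])
          ultimately show ?thesis unfolding S_def using t1 t2 by force
        qed
      qed
    qed
    then show ?thesis using lo hi unfolding S_def by blast
  qed
  have P2': "\<exists>C :: ((nat \<Rightarrow> real) \<times> real) set. finite C \<and> card C \<le> 2 * K + K * (K - 1) \<and>
         ?J = {t. \<forall>(a, b)\<in>C. (\<Sum>i=1..K. a i * t i) \<le> b}"
    by (rule exI[of _ "A1 \<union> A2 \<union> A3"]) (rule P2)
  show ?thesis
    apply (rule conjI)
     apply (rule P1)
    apply (rule conjI)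
     apply (rule P2')
    apply (rule ballI)
    apply (rule P3)
    apply assumption
    done
qed

end
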